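(* Let $\mathbb Y$ be a real locally convex Hausdorff topological vector space with topological dual $\mathbb Y^\sharp$, and let $d:\mathbb Y\times\mathbb Y^\sharp\to\mathbb R$ be the duality bilinear form $d(y,y^\sharp)=\langle y,y^\sharp\rangle$. Let $\mathbb X,\mathbb X^\sharp$ be sets and $c:\mathbb X\times\mathbb X^\sharp\to\overline{\mathbb R}$ a coupling. Let $K:\mathbb X\times\mathbb Y\to\overline{\mathbb R}$, $f:\mathbb X\to\overline{\mathbb R}$, and $g:\mathbb Y\to\,]-\infty,+\infty]$. For $x^\sharp\in\mathbb X^\sharp$ let $K_{x^\sharp}(y)=\inf_{x\in\mathbb X}\big((-c(x,x^\sharp))\mathbin{\overset{\cdot}{+}} K(x,y)\big)$. Suppose that (i) $g$ is a proper convex function; (ii) for every $x^\sharp\in\mathbb X^\sharp$, $K_{x^\sharp}$ is a proper convex function; (iii) for every $x^\sharp\in\mathbb X^\sharp$, $g$ is continuous at some point where $K_{x^\sharp}$ is finite. Then: if $f(x)=\inf_{y\in\mathbb Y}\big(K(x,y)\mathbin{\overset{\cdot}{+}} g(y)\big)$ for all $x\in\mathbb X$, it follows that $f^{c}(x^\sharp)=\inf_{y^\sharp\in\mathbb Y^\sharp}\big(K^{c\mathbin{\underset{\cdot}{+}} d}(x^\sharp,y^\sharp)\mathbin{\overset{\cdot}{+}} g^{-d}(y^\sharp)\big)$ for all $x^\sharp\in\mathbb X^\sharp$.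
   Context: $\overline{\mathbb R}=[-\infty,+\infty]$. The Moreau lower addition $\mathbin{\underset{\cdot}{+}}$ is usual addition extended by $(+\infty)\mathbin{\underset{\cdot}{+}}(-\infty)=(-\infty)\mathbin{\underset{\cdot}{+}}(+\infty)=-\infty$; the Moreau upper addition $\mathbin{\overset{\cdot}{+}}$ is usual addition extended by $(+\infty)\mathbin{\overset{\cdot}{+}}(-\infty)=(-\infty)\mathbin{\overset{\cdot}{+}}(+\infty)=+\infty$. $f^{c}(x^\sharp)=\sup_{x}\big(c(x,x^\sharp)\mathbin{\underset{\cdot}{+}}(-f(x))\big)$; $g^{-d}(y^\sharp)=\sup_{y}\big((-\langle y,y^\sharp\rangle)\mathbin{\underset{\cdot}{+}}(-g(y))\big)$; $K^{c\mathbin{\underset{\cdot}{+}} d}(x^\sharp,y^\sharp)=\sup_{x\in\mathbb X,y\in\mathbb Y}\big(c(x,x^\sharp)\mathbin{\underset{\cdot}{+}}\langle y,y^\sharp\rangle\mathbin{\underset{\cdot}{+}}(-K(x,y))\big)$. A function is proper if it never takes the value $-\infty$ and is not identically $+\infty$. *)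

theory Defs
  imports "HOL-Analysis.Analysis" "HOL-Library.Extended_Real"
begin

definition lower_add :: "ereal \<Rightarrow> ereal \<Rightarrow> ereal" (infixl "+\<^sub>l" 65) where
  "lower_add a b = (if (a = \<infinity> \<and> b = -\<infinity>) \<or> (a = -\<infinity> \<and> b = \<infinity>) then -\<infinity> else a + b)"

definition upper_add :: "ereal \<Rightarrow> ereal \<Rightarrow> ereal" (infixl "+\<^sub>u" 65) where
  "upper_add a b = (if (a = \<infinity> \<and> b = -\<infinity>) \<or> (a = -\<infinity> \<and> b = \<infinity>) then \<infinity> else a + b)"

text \<open>Real locally convex topological vector space (Hausdorffness is the class t2_space).\<close>
definition locally_convex_tvs :: "('b::{real_vector,topological_space}) itself \<Rightarrow> bool" where
  "locally_convex_tvs _ \<longleftrightarrow>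
     continuous_on UNIV (\<lambda>p::'b \<times> 'b. fst p + snd p) \<and>
     continuous_on UNIV (\<lambda>p::real \<times> 'b. fst p *\<^sub>R snd p) \<and>
     (\<forall>U::'b set. open U \<and> 0 \<in> U \<longrightarrow> (\<exists>V. open V \<and> convex V \<and> 0 \<in> V \<and> V \<subseteq> U))"

definition topo_dual :: "('b::{real_vector,topological_space} \<Rightarrow> real) set" where
  "topo_dual = {\<phi>. linear \<phi> \<and> continuous_on UNIV \<phi>}"

definition proper_fun :: "('b \<Rightarrow> ereal) \<Rightarrow> bool" where
  "proper_fun h \<longleftrightarrow> (\<forall>y. h y \<noteq> -\<infinity>) \<and> (\<exists>y. h y \<noteq> \<infinity>)"

definition convex_fun :: "('b::real_vector \<Rightarrow> ereal) \<Rightarrow> bool" where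
  "convex_fun h \<longleftrightarrow> convex {(y, r::real). h y \<le> ereal r}"

definition c_conj :: "('a \<Rightarrow> 'c \<Rightarrow> ereal) \<Rightarrow> ('a \<Rightarrow> ereal) \<Rightarrow> 'c \<Rightarrow> ereal" where
  "c_conj c f xs = (SUP x. c x xs +\<^sub>l (- f x))"

definition negd_conj :: "('b \<Rightarrow> ereal) \<Rightarrow> ('b \<Rightarrow> real) \<Rightarrow> ereal" where
  "negd_conj g ys = (SUP y. (- ereal (ys y)) +\<^sub>l (- g y))"

definition cd_conj :: "('a \<Rightarrow> 'c \<Rightarrow> ereal) \<Rightarrow> ('a \<Rightarrow> 'b \<Rightarrow> ereal) \<Rightarrow> 'c \<Rightarrow> ('b \<Rightarrow> real) \<Rightarrow> ereal" where
  "cd_conj c K xs ys = (SUP p. c (fst p) xs +\<^sub>l ereal (ys (snd p)) +\<^sub>l (- K (fst p) (snd p)))"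

end

theory Submission
  imports Defs
begin


definition subsp :: "('b::real_vector \<times> real) set \<Rightarrow> bool" where
  "subsp G \<longleftrightarrow> (0,0) \<in> G \<and> (\<forall>p\<in>G. \<forall>q\<in>G. p + q \<in> G) \<and> (\<forall>p\<in>G. \<forall>t::real. t *\<^sub>R p \<in> G)"

definition goodG :: "('b::real_vector \<Rightarrow> real \<Rightarrow> bool) \<Rightarrow> ('b \<times> real) set \<Rightarrow> bool" where
  "goodG P G \<longleftrightarrow> subsp G \<and> (\<forall>x a b. (x,a)\<in>G \<longrightarrow> (x,b)\<in>G \<longrightarrow> a = b)
     \<and> (\<forall>x a r. (x,a)\<in>G \<longrightarrow> P x r \<longrightarrow> a \<le> r)"

lemma chain_ub:
  assumes C: "C \<in> chains {G. goodG P G}" and zero: "\<forall>r. P 0 r \<longrightarrow> 0 \<le> r"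
  shows "\<exists>U\<in>{G. goodG P G}. \<forall>X\<in>C. X \<subseteq> U"
proof (cases "C = {}")
  case True
  have "goodG P {(0,0)}" using zero by (auto simp: goodG_def subsp_def)
  then show ?thesis using True by auto
next
  case False
  have sub: "C \<subseteq> {G. goodG P G}" and ch: "\<forall>A\<in>C. \<forall>B\<in>C. A \<subseteq> B \<or> B \<subseteq> A"
    using C by (auto simp: chains_def chain_subset_def)
  have "goodG P (\<Union>C)"
    unfolding goodG_def subsp_def
  proof (intro conjI ballI allI impI)
    obtain X where "X \<in> C" using False by auto
    then show "(0,0) \<in> \<Union>C" using sub by (auto simp: goodG_def subsp_def)
  next
    fix p q assume "p \<in> \<Union>C" "q \<in> \<Union>C"
    then obtain X Y where XY: "X \<in> C" "Y \<in> C" "p \<in> X" "q \<in> Y" by auto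
    have "\<exists>Z\<in>C. p \<in> Z \<and> q \<in> Z" using ch XY by blast
    then obtain Z where "Z \<in> C" "p \<in> Z" "q \<in> Z" by blast
    then have "p + q \<in> Z" using sub by (auto simp: goodG_def subsp_def)
    then show "p + q \<in> \<Union>C" using \<open>Z \<in> C\<close> by blast
  next
    fix p and t :: real assume "p \<in> \<Union>C"
    then obtain X where X: "X \<in> C" "p \<in> X" by auto
    then have "t *\<^sub>R p \<in> X" using sub by (auto simp: goodG_def subsp_def)
    then show "t *\<^sub>R p \<in> \<Union>C" using X by blast
  next
    fix x a b assume "(x,a) \<in> \<Union>C" "(x,b) \<in> \<Union>C"
    then obtain X Y where XY: "X \<in> C" "Y \<in> C" "(x,a) \<in> X" "(x,b) \<in> Y" by auto
    have "\<exists>Z\<in>C. (x,a) \<in> Z \<and> (x,b) \<in> Z" using ch XY by blast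
    then obtain Z where "Z \<in> C" "(x,a) \<in> Z" "(x,b) \<in> Z" by blast
    then show "a = b" using sub by (auto simp: goodG_def)
  next
    fix x a r assume "(x,a) \<in> \<Union>C" "P x r"
    then obtain X where X: "X \<in> C" "(x,a) \<in> X" "P x r" by auto
    then show "a \<le> r" using sub by (auto simp: goodG_def)
  qed
  then show ?thesis by auto
qed

lemma extend_step:
  fixes P :: "'b::real_vector \<Rightarrow> real \<Rightarrow> bool"
  assumes good: "goodG P G" and x0: "x0 \<notin> fst ` G"
    and conv: "\<And>a b r s l. P a r \<Longrightarrow> P b s \<Longrightarrow> 0 < l \<Longrightarrow> l < 1 \<Longrightarrow>
                 P (l *\<^sub>R a + (1 - l) *\<^sub>R b) (l * r + (1 - l) * s)"
    and absorb: "\<And>x. \<exists>t>0. \<exists>r. P (t *\<^sub>R x) r"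
  shows "\<exists>G'. goodG P G' \<and> G \<subset> G'"
proof -
  have sG: "subsp G" and fG: "\<And>x a b. (x,a)\<in>G \<Longrightarrow> (x,b)\<in>G \<Longrightarrow> a = b"
    and dG: "\<And>x a r. (x,a)\<in>G \<Longrightarrow> P x r \<Longrightarrow> a \<le> r"
    using good by (auto simp: goodG_def)
  have G0: "(0,0) \<in> G" and Gadd: "\<And>p q. p \<in> G \<Longrightarrow> q \<in> G \<Longrightarrow> p + q \<in> G"
    and Gscale: "\<And>p t. p \<in> G \<Longrightarrow> t *\<^sub>R p \<in> G" using sG by (auto simp: subsp_def)
  define L where "L = {(a - r) / s | m a s r. (m,a) \<in> G \<and> s > 0 \<and> P (m - s *\<^sub>R x0) r}"
  define U where "U = {(r - a) / t | m a t r. (m,a) \<in> G \<and> t > 0 \<and> P (m + t *\<^sub>R x0) r}"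
  have key: "l \<le> u" if "l \<in> L" "u \<in> U" for l u
  proof -
    obtain m' a' s r' where A: "l = (a' - r') / s" "(m',a') \<in> G" "s > 0" "P (m' - s *\<^sub>R x0) r'"
      using \<open>l \<in> L\<close> unfolding L_def by blast
    obtain m a t r where B: "u = (r - a) / t" "(m,a) \<in> G" "t > 0" "P (m + t *\<^sub>R x0) r"
      using \<open>u \<in> U\<close> unfolding U_def by blast
    define k where "k = t / (s + t)"
    have k: "0 < k" "k < 1" using A(3) B(3) by (auto simp: k_def field_simps)
    have ks: "k * s = (1 - k) * t" using A(3) B(3) by (simp add: k_def field_simps)
    have pt: "k *\<^sub>R (m' - s *\<^sub>R x0) + (1 - k) *\<^sub>R (m + t *\<^sub>R x0) = k *\<^sub>R m' + (1 - k) *\<^sub>R m + ((1 - k) * t - k * s) *\<^sub>R x0"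
      by (simp add: algebra_simps)
    have P1: "P (k *\<^sub>R m' + (1 - k) *\<^sub>R m) (k * r' + (1 - k) * r)"
      using conv[OF A(4) B(4) k] unfolding pt ks by simp
    have "(k *\<^sub>R m' + (1 - k) *\<^sub>R m, k * a' + (1 - k) * a) = k *\<^sub>R (m',a') + (1 - k) *\<^sub>R (m,a)"
      by simp
    also have "\<dots> \<in> G" using Gadd Gscale A(2) B(2) by blast
    finally have "k * a' + (1 - k) * a \<le> k * r' + (1 - k) * r" using dG P1 by blast
    then have ineq: "(s + t) * (k * a' + (1 - k) * a) \<le> (s + t) * (k * r' + (1 - k) * r)"
      using A(3) B(3) by (intro mult_left_mono) auto
    have st1: "(s + t) * k = t" using A(3) B(3) by (simp add: k_def)
    moreover have st2: "(s + t) * (1 - k) = s" using A(3) B(3) by (simp add: k_def field_simps)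
    moreover have "\<And>x y. (s + t) * (k * x + (1 - k) * y) = ((s + t) * k) * x + ((s + t) * (1 - k)) * y"
      by (simp add: algebra_simps)
    ultimately have "(s + t) * (k * a' + (1 - k) * a) = t * a' + s * a"
       "(s + t) * (k * r' + (1 - k) * r) = t * r' + s * r" by auto
    then have "t * a' + s * a \<le> t * r' + s * r" using ineq by metis
    then have "t * (a' - r') \<le> s * (r - a)" by (simp add: algebra_simps)
    then have "(a' - r') / s \<le> (r - a) / t" using A(3) B(3)
      by (simp add: divide_simps mult.commute)
    then show "l \<le> u" using A(1) B(1) by simp
  qed
  obtain s r where sr: "s > 0" "P (s *\<^sub>R (- x0)) r" using absorb by blast
  then have "(0 - r) / s \<in> L" unfolding L_def using G0 by force
  then have Lne: "L \<noteq> {}" by blast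
  obtain t r where tr: "t > 0" "P (t *\<^sub>R x0) r" using absorb by blast
  then have "(r - 0) / t \<in> U" unfolding U_def using G0 by force
  then have bdd: "bdd_above L" using key by (auto simp: bdd_above_def)
  define c where "c = Sup L"
  have cL: "l \<le> c" if "l \<in> L" for l using cSup_upper[OF that bdd] by (simp add: c_def)
  have cU: "c \<le> u" if "u \<in> U" for u unfolding c_def using Lne key that by (intro cSup_least) auto
  define G' where "G' = {(m + t *\<^sub>R x0, a + t * c) | m a t. (m,a) \<in> G}"
  have memG': "\<And>m a t. (m,a) \<in> G \<Longrightarrow> (m + t *\<^sub>R x0, a + t * c) \<in> G'"
    unfolding G'_def by blast
  have "goodG P G'"
    unfolding goodG_def subsp_def
  proof (intro conjI ballI allI impI)
    show "(0,0) \<in> G'" unfolding G'_def using G0 by force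
  next
    fix p q assume "p \<in> G'" "q \<in> G'"
    then obtain m1 a1 t1 m2 a2 t2 where "p = (m1 + t1 *\<^sub>R x0, a1 + t1 * c)" "(m1,a1) \<in> G"
      "q = (m2 + t2 *\<^sub>R x0, a2 + t2 * c)" "(m2,a2) \<in> G" unfolding G'_def by blast
    moreover have "(m1 + m2, a1 + a2) \<in> G" using Gadd[OF \<open>(m1,a1) \<in> G\<close> \<open>(m2,a2) \<in> G\<close>] by simp
    ultimately show "p + q \<in> G'" using memG'[of "m1 + m2" "a1 + a2" "t1 + t2"]
      by (simp add: algebra_simps)
  next
    fix p and k :: real assume "p \<in> G'"
    then obtain m a t where "p = (m + t *\<^sub>R x0, a + t * c)" "(m,a) \<in> G" unfolding G'_def by blast
    moreover have "(k *\<^sub>R m, k * a) \<in> G" using Gscale[OF \<open>(m,a) \<in> G\<close>, of k] by simp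
    ultimately show "k *\<^sub>R p \<in> G'" using memG'[of "k *\<^sub>R m" "k * a" "k * t"]
      by (simp add: algebra_simps)
  next
    fix x a b assume "(x,a) \<in> G'" "(x,b) \<in> G'"
    then obtain m1 a1 t1 m2 a2 t2 where E: "x = m1 + t1 *\<^sub>R x0" "a = a1 + t1 * c" "(m1,a1) \<in> G"
      "x = m2 + t2 *\<^sub>R x0" "b = a2 + t2 * c" "(m2,a2) \<in> G" unfolding G'_def by blast
    have "t1 = t2"
    proof (rule ccontr)
      assume ne: "t1 \<noteq> t2"
      have "(m2 - m1, a2 - a1) \<in> G" using Gadd[OF E(6) Gscale[OF E(3), of "-1"]] by simp
      then have "(1 / (t1 - t2)) *\<^sub>R (m2 - m1, a2 - a1) \<in> G" by (rule Gscale)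
      moreover have "(1 / (t1 - t2)) *\<^sub>R (m2 - m1) = x0"
      proof -
        have "m2 - m1 = (t1 - t2) *\<^sub>R x0" using E(1,4) by (simp add: algebra_simps)
        then show ?thesis using ne by simp
      qed
      ultimately have "x0 \<in> fst ` G" by (metis fst_conv image_eqI scaleR_Pair)
      then show False using x0 by blast
    qed
    then have "m1 = m2" using E by simp
    then have "a1 = a2" using fG E by blast
    then show "a = b" using E \<open>t1 = t2\<close> by simp
  next
    fix x a r assume "(x,a) \<in> G'" "P x r"
    then obtain m a1 t where E: "x = m + t *\<^sub>R x0" "a = a1 + t * c" "(m,a1) \<in> G" unfolding G'_def by blast
    consider "t > 0" | "t = 0" | "t < 0" by linarith
    then show "a \<le> r"
    proof cases
      case 1
      then have "(r - a1) / t \<in> U" unfolding U_def using E \<open>P x r\<close> by blast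
      then have "c \<le> (r - a1) / t" by (rule cU)
      then show ?thesis using 1 E by (simp add: field_simps)
    next
      case 2 then show ?thesis using E dG \<open>P x r\<close> by simp
    next
      case 3
      have "x = m - (- t) *\<^sub>R x0" using E by simp
      then have "(a1 - r) / (- t) \<in> L" unfolding L_def using E 3 \<open>P x r\<close>
        by (intro CollectI exI[of _ m] exI[of _ a1] exI[of _ "-t"] exI[of _ r]) auto
      then have "(a1 - r) / (- t) \<le> c" by (rule cL)
      then show ?thesis using 3 E by (simp add: field_simps)
    qed
  qed
  moreover have "G \<subseteq> G'" using memG'[of _ _ 0] by auto
  moreover have "(x0, c) \<in> G'" using memG'[OF G0, of 1] by simp
  moreover have "(x0, c) \<notin> G" using x0 by force
  ultimately show ?thesis by blast
qed

lemma hahn_banach_convex: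
  fixes P :: "'b::real_vector \<Rightarrow> real \<Rightarrow> bool"
  assumes conv: "\<And>a b r s l. P a r \<Longrightarrow> P b s \<Longrightarrow> 0 < l \<Longrightarrow> l < 1 \<Longrightarrow>
                 P (l *\<^sub>R a + (1 - l) *\<^sub>R b) (l * r + (1 - l) * s)"
    and absorb: "\<And>x. \<exists>t>0. \<exists>r. P (t *\<^sub>R x) r"
    and zero: "\<And>r. P 0 r \<Longrightarrow> 0 \<le> r"
  shows "\<exists>\<phi>. linear \<phi> \<and> (\<forall>x r. P x r \<longrightarrow> \<phi> x \<le> r)"
proof -
  have "\<exists>M\<in>{G. goodG P G}. \<forall>X\<in>{G. goodG P G}. M \<subseteq> X \<longrightarrow> X = M"
    by (rule Zorn_Lemma2) (use chain_ub zero in blast)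
  then obtain M where M: "goodG P M" and max: "\<And>X. goodG P X \<Longrightarrow> M \<subseteq> X \<Longrightarrow> X = M" by blast
  have dom: "x \<in> fst ` M" for x
  proof (rule ccontr)
    assume "x \<notin> fst ` M"
    from extend_step[OF M this conv absorb] obtain G' where "goodG P G'" "M \<subset> G'" by blast
    then show False using max by blast
  qed
  have sM: "subsp M" and fM: "\<And>x a b. (x,a)\<in>M \<Longrightarrow> (x,b)\<in>M \<Longrightarrow> a = b"
    and dM: "\<And>x a r. (x,a)\<in>M \<Longrightarrow> P x r \<Longrightarrow> a \<le> r"
    using M by (auto simp: goodG_def)
  define \<phi> where "\<phi> x = (THE a. (x,a) \<in> M)" for x
  have phiM: "(x, \<phi> x) \<in> M" for x
  proof -
    obtain a where "(x,a) \<in> M" using dom[of x] by force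
    then have "(THE a. (x,a) \<in> M) = a" using fM by blast
    then show ?thesis using \<open>(x,a) \<in> M\<close> by (simp add: \<phi>_def)
  qed
  have "linear \<phi>"
  proof (rule linearI)
    fix x y
    have "(x, \<phi> x) + (y, \<phi> y) \<in> M" using sM phiM[of x] phiM[of y] unfolding subsp_def by blast
    then show "\<phi> (x + y) = \<phi> x + \<phi> y" using fM[OF phiM[of "x + y"]] by simp
  next
    fix t :: real and x
    have "t *\<^sub>R (x, \<phi> x) \<in> M" using sM phiM[of x] unfolding subsp_def by blast
    then show "\<phi> (t *\<^sub>R x) = t *\<^sub>R \<phi> x" using fM[OF phiM[of "t *\<^sub>R x"]] by simp
  qed
  moreover have "\<forall>x r. P x r \<longrightarrow> \<phi> x \<le> r" using dM phiM by blast
  ultimately show ?thesis by blast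
qed



lemma tvs_cont:
  assumes "locally_convex_tvs TYPE('b::{real_vector,topological_space})"
  shows "continuous_on UNIV (\<lambda>z::'b. z + w)" "continuous_on UNIV (\<lambda>z::'b. a *\<^sub>R z)"
    "continuous_on UNIV (\<lambda>t::real. t *\<^sub>R (x::'b))"
proof -
  have add: "continuous_on UNIV (\<lambda>p::'b \<times> 'b. fst p + snd p)"
    and mul: "continuous_on UNIV (\<lambda>p::real \<times> 'b. fst p *\<^sub>R snd p)"
    using assms by (auto simp: locally_convex_tvs_def)
  have "continuous_on UNIV ((\<lambda>p::'b \<times> 'b. fst p + snd p) \<circ> (\<lambda>z. (z, w)))"
    by (rule continuous_on_compose[OF continuous_on_Pair[OF continuous_on_id continuous_on_const]])
       (rule continuous_on_subset[OF add], simp)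
  then show "continuous_on UNIV (\<lambda>z::'b. z + w)" by (simp add: o_def)
  have "continuous_on UNIV ((\<lambda>p::real \<times> 'b. fst p *\<^sub>R snd p) \<circ> (\<lambda>z. (a, z)))"
    by (rule continuous_on_compose[OF continuous_on_Pair[OF continuous_on_const continuous_on_id]])
       (rule continuous_on_subset[OF mul], simp)
  then show "continuous_on UNIV (\<lambda>z::'b. a *\<^sub>R z)" by (simp add: o_def)
  have "continuous_on UNIV ((\<lambda>p::real \<times> 'b. fst p *\<^sub>R snd p) \<circ> (\<lambda>t. (t, x)))"
    by (rule continuous_on_compose[OF continuous_on_Pair[OF continuous_on_id continuous_on_const]])
       (rule continuous_on_subset[OF mul], simp)
  then show "continuous_on UNIV (\<lambda>t::real. t *\<^sub>R (x::'b))" by (simp add: o_def)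
qed

lemma open_vimage_UNIV: "continuous_on UNIV f \<Longrightarrow> open B \<Longrightarrow> open (f -` B)"
  using continuous_on_open_vimage[of UNIV f] by auto

lemma tvs_absorb:
  assumes lc: "locally_convex_tvs TYPE('b::{real_vector,topological_space})"
    and N: "open N" "(0::'b) \<in> N"
  shows "\<exists>t>0. t *\<^sub>R x \<in> N"
proof -
  have "open ((\<lambda>t::real. t *\<^sub>R x) -` N)" by (rule open_vimage_UNIV[OF tvs_cont(3)[OF lc] N(1)])
  moreover have "0 \<in> (\<lambda>t::real. t *\<^sub>R x) -` N" using N by simp
  ultimately obtain e where e: "e > 0" "ball 0 e \<subseteq> (\<lambda>t::real. t *\<^sub>R x) -` N"
    using openE by blast
  moreover have "e/2 \<in> ball 0 e" using e by (simp add: dist_real_def)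
  ultimately have "e/2 \<in> (\<lambda>t::real. t *\<^sub>R x) -` N" by blast
  then show ?thesis using e by (intro exI[of _ "e/2"]) auto
qed

lemma tvs_linear_cont:
  assumes lc: "locally_convex_tvs TYPE('b::{real_vector,topological_space})"
    and lin: "linear (\<psi>::'b \<Rightarrow> real)" and N: "open N" "0 \<in> N" and bd: "\<And>u. u \<in> N \<Longrightarrow> \<psi> u \<le> C"
  shows "continuous_on UNIV \<psi>"
  unfolding continuous_on_topological
proof (intro ballI allI impI)
  fix y B assume "open B" "\<psi> y \<in> B"
  then obtain e where e: "e > 0" "ball (\<psi> y) e \<subseteq> B" using openE by blast
  define C' where "C' = max C 1"
  have C': "C' > 0" "\<And>u. u \<in> N \<Longrightarrow> \<psi> u \<le> C'" using bd by (auto simp: C'_def intro: le_max_iff_disj[THEN iffD2])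
  define d where "d = e / (2 * C')"
  have d: "d > 0" using e C' by (simp add: d_def)
  define A where "A = (\<lambda>z. z + (-y)) -` ((\<lambda>w. (1/d) *\<^sub>R w) -` N) \<inter> (\<lambda>z. z + (-y)) -` ((\<lambda>w. (-1/d) *\<^sub>R w) -` N)"
  have "open A"
  proof -
    have o1: "open ((\<lambda>w. (1/d) *\<^sub>R w) -` N)" by (rule open_vimage_UNIV[OF tvs_cont(2)[OF lc] N(1)])
    have o2: "open ((\<lambda>w. (-1/d) *\<^sub>R w) -` N)" by (rule open_vimage_UNIV[OF tvs_cont(2)[OF lc] N(1)])
    show ?thesis unfolding A_def
      by (intro open_Int open_vimage_UNIV[OF tvs_cont(1)[OF lc]] o1 o2)
  qed
  moreover have "y \<in> A" using N by (simp add: A_def)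
  moreover have "\<psi> z \<in> B" if "z \<in> A" for z
  proof -
    have "\<psi> ((1/d) *\<^sub>R (z + - y)) \<le> C'" "\<psi> ((-1/d) *\<^sub>R (z + - y)) \<le> C'"
      using that C'(2) by (auto simp: A_def)
    then have "(1/d) * (\<psi> z - \<psi> y) \<le> C'" "(-1/d) * (\<psi> z - \<psi> y) \<le> C'"
      using lin linear_diff[OF lin, of z y] by (simp_all add: linear_cmul linear_add linear_neg)
    then have "\<psi> z - \<psi> y \<le> d * C'" "\<psi> y - \<psi> z \<le> d * C'" using d
      by (simp_all add: field_simps)
    moreover have "d * C' = e / 2" using C' by (simp add: d_def)
    ultimately have "dist (\<psi> z) (\<psi> y) < e" using e by (simp add: dist_real_def abs_less_iff)
    then show ?thesis using e by (auto simp: dist_commute)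
  qed
  ultimately show "\<exists>A. open A \<and> y \<in> A \<and> (\<forall>z\<in>UNIV. z \<in> A \<longrightarrow> \<psi> z \<in> B)" by blast
qed



lemma ereal_add_INF_real: "ereal r + (INF y. F y) = (INF y. ereal r + F y :: ereal)"
proof (rule antisym)
  show "ereal r + (INF y. F y) \<le> (INF y. ereal r + F y)"
    by (intro INF_greatest add_left_mono INF_lower) auto
next
  define R where "R = (INF y. ereal r + F y)"
  have "ereal (-r) + R \<le> F y" for y
  proof -
    have "R \<le> ereal r + F y" unfolding R_def by (rule INF_lower) auto
    then have "ereal (-r) + R \<le> ereal (-r) + (ereal r + F y)" by (rule add_left_mono)
    also have "\<dots> = F y" by (cases "F y") auto
    finally show ?thesis .
  qed
  then have "ereal (-r) + R \<le> (INF y. F y)" by (rule INF_greatest)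
  then have "ereal r + (ereal (-r) + R) \<le> ereal r + (INF y. F y)" by (rule add_left_mono)
  moreover have "ereal r + (ereal (-r) + R) = R" by (cases R) auto
  ultimately show "(INF y. ereal r + F y) \<le> ereal r + (INF y. F y)" unfolding R_def by simp
qed

lemma uadd_simps:
  "\<infinity> +\<^sub>u b = \<infinity>" "b +\<^sub>u \<infinity> = \<infinity>" "ereal r +\<^sub>u b = ereal r + b" "b +\<^sub>u ereal r = b + ereal r"
  "-\<infinity> +\<^sub>u -\<infinity> = -\<infinity>"
  by (auto simp: upper_add_def)

lemma ladd_simps:
  "-\<infinity> +\<^sub>l b = -\<infinity>" "b +\<^sub>l -\<infinity> = -\<infinity>" "ereal r +\<^sub>l b = ereal r + b" "b +\<^sub>l ereal r = b + ereal r"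
  "\<infinity> +\<^sub>l \<infinity> = \<infinity>"
  by (auto simp: lower_add_def)

lemma neg_ladd: "- (a +\<^sub>l b) = (- a) +\<^sub>u (- b)"
  by (cases a; cases b; simp add: lower_add_def upper_add_def)

lemma neg_uadd: "- (a +\<^sub>u b) = (- a) +\<^sub>l (- b)"
  by (cases a; cases b; simp add: lower_add_def upper_add_def)

lemma uadd_comm: "a +\<^sub>u b = b +\<^sub>u a"
  by (cases a; cases b; simp add: upper_add_def)

lemma uadd_assoc: "(a +\<^sub>u b) +\<^sub>u c = a +\<^sub>u (b +\<^sub>u c)"
  by (cases a; cases b; cases c; simp add: upper_add_def)

lemma ladd_comm: "a +\<^sub>l b = b +\<^sub>l a"
  by (cases a; cases b; simp add: lower_add_def)

lemma ladd_assoc: "(a +\<^sub>l b) +\<^sub>l c = a +\<^sub>l (b +\<^sub>l c)"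
  by (cases a; cases b; cases c; simp add: lower_add_def)

lemma uadd_plus: "a \<noteq> -\<infinity> \<Longrightarrow> b \<noteq> -\<infinity> \<Longrightarrow> a +\<^sub>u b = a + b"
  by (simp add: upper_add_def)

lemma uadd_INF_left: "a +\<^sub>u (INF y. F y) = (INF y. a +\<^sub>u F y)"
proof (cases a)
  case (real r) then show ?thesis by (simp add: uadd_simps ereal_add_INF_real)
next
  case PInf then show ?thesis by (simp add: uadd_simps)
next
  case MInf
  show ?thesis
  proof (cases "(INF y. F y) = \<infinity>")
    case True
    have "F y = \<infinity>" for y
    proof -
      have "(INF y. F y) \<le> F y" by (rule INF_lower) simp
      then show ?thesis using True by simp
    qed
    then show ?thesis using True MInf by (simp add: upper_add_def)
  next
    case False
    then have "(INF y. F y) < \<infinity>" by (simp add: less_top[symmetric])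
    then obtain y where "F y < \<infinity>" by (meson INF_less_iff)
    then have "a +\<^sub>u F y = -\<infinity>" using MInf by (simp add: upper_add_def)
    then have "(INF y. a +\<^sub>u F y) = -\<infinity>" by (metis INF_lower UNIV_I ereal_infty_less_eq(2))
    moreover have "a +\<^sub>u (INF y. F y) = -\<infinity>" using MInf False by (cases "INF y. F y") (auto simp: upper_add_def)
    ultimately show ?thesis by simp
  qed
qed

lemma uadd_INF_right: "(INF y. F y) +\<^sub>u a = (INF y. F y +\<^sub>u a)"
  using uadd_INF_left[of a F] by (simp add: uadd_comm)

lemma ladd_SUP_left: "a +\<^sub>l (SUP y. F y) = (SUP y. a +\<^sub>l F y)"
proof -
  have "- (a +\<^sub>l (SUP y. F y)) = (-a) +\<^sub>u (INF y. - F y)"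
    by (simp add: neg_ladd ereal_INF_uminus_eq)
  also have "\<dots> = (INF y. - (a +\<^sub>l F y))" by (simp add: uadd_INF_left neg_ladd)
  also have "\<dots> = - (SUP y. a +\<^sub>l F y)" by (simp add: ereal_INF_uminus_eq)
  finally show ?thesis by simp
qed



lemma SUP_prod_UNIV: "(SUP p. F (fst p) (snd p)) = (SUP y. SUP x. F x y :: 'z::complete_lattice)"
proof (rule antisym)
  show "(SUP p. F (fst p) (snd p)) \<le> (SUP y. SUP x. F x y)"
  proof (rule SUP_least)
    fix p :: "'a \<times> 'b"
    have "F (fst p) (snd p) \<le> (SUP x. F x (snd p))" by (rule SUP_upper) simp
    also have "\<dots> \<le> (SUP y. SUP x. F x y)" by (rule SUP_upper[of "snd p" UNIV "\<lambda>y. SUP x. F x y"]) simp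
    finally show "F (fst p) (snd p) \<le> (SUP y. SUP x. F x y)" .
  qed
  show "(SUP y. SUP x. F x y) \<le> (SUP p. F (fst p) (snd p))"
  proof (intro SUP_least)
    fix x y
    show "F x y \<le> (SUP p. F (fst p) (snd p))"
      using SUP_upper[of "(x,y)" UNIV "\<lambda>p. F (fst p) (snd p)"] by simp
  qed
qed

lemma convex_funD:
  assumes "convex_fun F" "F a \<le> ereal r" "F b \<le> ereal s" "0 \<le> l" "l \<le> 1"
  shows "F (l *\<^sub>R a + (1 - l) *\<^sub>R b) \<le> ereal (l * r + (1 - l) * s)"
proof -
  let ?E = "{(y, r::real). F y \<le> ereal r}"
  have c: "convex ?E" using assms(1) unfolding convex_fun_def .
  have m: "(a, r) \<in> ?E" "(b, s) \<in> ?E" using assms(2,3) by auto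
  have "l *\<^sub>R (a, r) + (1 - l) *\<^sub>R (b, s) \<in> ?E"
    by (rule convexD[OF c m]) (use assms(4,5) in auto)
  then show ?thesis by simp
qed

lemma ladd_swap: "ereal r +\<^sub>l (a +\<^sub>l k) = (a +\<^sub>l ereal r) +\<^sub>l k"
  by (cases a; cases k; simp add: lower_add_def)

theorem corollary3:
  fixes c :: "'a \<Rightarrow> 'c \<Rightarrow> ereal"
    and K :: "'a \<Rightarrow> 'b::{real_vector,t2_space} \<Rightarrow> ereal"
    and f :: "'a \<Rightarrow> ereal"
    and g :: "'b \<Rightarrow> ereal"
  assumes lctvs: "locally_convex_tvs TYPE('b)"
    and g_range: "\<forall>y. g y \<noteq> -\<infinity>"
    and g_proper: "proper_fun g" and g_convex: "convex_fun g"
    and K_proper: "\<forall>xs. proper_fun (\<lambda>y. INF x. (- c x xs) +\<^sub>u K x y)"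
    and K_convex: "\<forall>xs. convex_fun (\<lambda>y. INF x. (- c x xs) +\<^sub>u K x y)"
    and cont: "\<forall>xs. \<exists>y0. \<bar>(INF x. (- c x xs) +\<^sub>u K x y0)\<bar> \<noteq> \<infinity>
                        \<and> \<bar>g y0\<bar> \<noteq> \<infinity> \<and> isCont g y0"
  shows "(\<forall>x. f x = (INF y. K x y +\<^sub>u g y)) \<longrightarrow>
         (\<forall>xs. c_conj c f xs = (INF ys\<in>topo_dual. cd_conj c K xs ys +\<^sub>u negd_conj g ys))"
proof (intro impI allI)
  assume hf: "\<forall>x. f x = (INF y. K x y +\<^sub>u g y)"
  fix xs
  define h where "h = (\<lambda>y. INF x. (- c x xs) +\<^sub>u K x y)"
  have h_proper: "proper_fun h" and h_convex: "convex_fun h"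
    using K_proper K_convex by (simp_all add: h_def)
  have "\<exists>y0. \<bar>h y0\<bar> \<noteq> \<infinity> \<and> \<bar>g y0\<bar> \<noteq> \<infinity> \<and> isCont g y0"
    using cont by (simp add: h_def)
  then obtain y0 where y0all: "\<bar>h y0\<bar> \<noteq> \<infinity> \<and> \<bar>g y0\<bar> \<noteq> \<infinity> \<and> isCont g y0"
    by (rule exE)
  note y0 = y0all[THEN conjunct1] y0all[THEN conjunct2, THEN conjunct1] y0all[THEN conjunct2, THEN conjunct2]
  have hnm: "h y \<noteq> -\<infinity>" for y using h_proper by (simp add: proper_fun_def)
  have gnm: "g y \<noteq> -\<infinity>" for y using g_range by simp
  obtain H0 where H0: "h y0 = ereal H0" using y0(1) by (cases "h y0") auto
  obtain G0 where G0: "g y0 = ereal G0" using y0(2) by (cases "g y0") auto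
  define A' where "A' = (INF y. h y + g y)"
  have S1: "c_conj c f xs = - A'"
  proof -
    have "c_conj c f xs = - (INF x. - (c x xs +\<^sub>l - f x))"
      unfolding c_conj_def by (simp add: ereal_INF_uminus_eq)
    also have "(INF x. - (c x xs +\<^sub>l - f x)) = (INF x. (- c x xs) +\<^sub>u f x)"
      by (simp add: neg_ladd)
    also have "\<dots> = (INF x. INF y. (- c x xs) +\<^sub>u (K x y +\<^sub>u g y))"
      using hf by (simp add: uadd_INF_left)
    also have "\<dots> = (INF x. INF y. ((- c x xs) +\<^sub>u K x y) +\<^sub>u g y)"
      by (simp add: uadd_assoc)
    also have "\<dots> = (INF y. INF x. ((- c x xs) +\<^sub>u K x y) +\<^sub>u g y)"
      by (rule INF_commute)
    also have "\<dots> = (INF y. h y +\<^sub>u g y)"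
      by (simp add: h_def uadd_INF_right)
    also have "\<dots> = A'" unfolding A'_def using hnm gnm by (simp add: uadd_plus)
    finally show ?thesis .
  qed
  have S2: "cd_conj c K xs \<phi> = (SUP y. ereal (\<phi> y) + - h y)" for \<phi>
  proof -
    have "ereal (\<phi> y) + - h y = (SUP x. ereal (\<phi> y) +\<^sub>l (c x xs +\<^sub>l - K x y))" for y
    proof -
      have "- h y = (SUP x. - ((- c x xs) +\<^sub>u K x y))"
        unfolding h_def by (simp only: ereal_SUP_uminus_eq)
      also have "\<dots> = (SUP x. c x xs +\<^sub>l - K x y)"
        by (simp only: neg_uadd ereal_uminus_uminus)
      finally have "ereal (\<phi> y) +\<^sub>l - h y = (SUP x. ereal (\<phi> y) +\<^sub>l (c x xs +\<^sub>l - K x y))"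
        by (simp only: ladd_SUP_left)
      then show ?thesis by (simp only: ladd_simps)
    qed
    then have "(SUP y. ereal (\<phi> y) + - h y) = (SUP y. SUP x. ereal (\<phi> y) +\<^sub>l (c x xs +\<^sub>l - K x y))"
      by simp
    also have "\<dots> = (SUP p. ereal (\<phi> (snd p)) +\<^sub>l (c (fst p) xs +\<^sub>l - K (fst p) (snd p)))"
      by (rule SUP_prod_UNIV[symmetric])
    also have "\<dots> = cd_conj c K xs \<phi>"
      unfolding cd_conj_def by (simp only: ladd_swap)
    finally show ?thesis by simp
  qed
  have S3: "negd_conj g \<phi> = (SUP y. ereal (- \<phi> y) + - g y)" for \<phi>
    unfolding negd_conj_def by (simp add: ladd_simps)
  have weak: "- A' \<le> cd_conj c K xs \<phi> +\<^sub>u negd_conj g \<phi>" for \<phi>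
  proof (cases "cd_conj c K xs \<phi> = \<infinity> \<or> negd_conj g \<phi> = \<infinity>")
    case True then show ?thesis by (auto simp: uadd_simps)
  next
    case False
    have "ereal (\<phi> y0) + - h y0 \<le> cd_conj c K xs \<phi>" unfolding S2 by (rule SUP_upper) simp
    then have "cd_conj c K xs \<phi> \<noteq> -\<infinity>" using H0 by auto
    then obtain Hs where Hs: "cd_conj c K xs \<phi> = ereal Hs" using False by (cases "cd_conj c K xs \<phi>") auto
    have "ereal (- \<phi> y0) + - g y0 \<le> negd_conj g \<phi>" unfolding S3 by (rule SUP_upper) simp
    then have "negd_conj g \<phi> \<noteq> -\<infinity>" using G0 by auto
    then obtain Gs where Gs: "negd_conj g \<phi> = ereal Gs" using False by (cases "negd_conj g \<phi>") auto
    have "ereal (- (Hs + Gs)) \<le> h y + g y" for y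
    proof -
      have a: "ereal (\<phi> y) + - h y \<le> ereal Hs" using Hs unfolding S2 by (metis SUP_upper UNIV_I)
      have b: "ereal (- \<phi> y) + - g y \<le> ereal Gs" using Gs unfolding S3 by (metis SUP_upper UNIV_I)
      show ?thesis using a b hnm[of y] gnm[of y] by (cases "h y"; cases "g y") auto
    qed
    then have "ereal (- (Hs + Gs)) \<le> A'" unfolding A'_def by (rule INF_greatest)
    then have "- A' \<le> ereal (Hs + Gs)" by (cases A') auto
    then show ?thesis using Hs Gs by (simp add: uadd_simps)
  qed
  show "c_conj c f xs = (INF ys\<in>topo_dual. cd_conj c K xs ys +\<^sub>u negd_conj g ys)"
    unfolding S1
  proof (rule antisym)
    show "- A' \<le> (INF ys\<in>topo_dual. cd_conj c K xs ys +\<^sub>u negd_conj g ys)"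
      by (rule INF_greatest) (rule weak)
  next
    show "(INF ys\<in>topo_dual. cd_conj c K xs ys +\<^sub>u negd_conj g ys) \<le> - A'"
    proof (cases "A' = -\<infinity>")
      case True then show ?thesis by simp
    next
      case False
      have "A' \<le> h y0 + g y0" unfolding A'_def by (rule INF_lower) simp
      then have "A' \<noteq> \<infinity>" using H0 G0 by auto
      then obtain \<alpha> where \<alpha>: "A' = ereal \<alpha>" using False by (cases A') auto
      define P where "P u r \<longleftrightarrow> (\<exists>y. h y + g (y + u) < ereal (r + \<alpha>))" for u r
      have conv: "P (l *\<^sub>R a + (1 - l) *\<^sub>R b) (l * r + (1 - l) * s)"
        if "P a r" "P b s" "0 < l" "l < 1" for a b r s l
      proof -
        obtain y1 where y1: "h y1 + g (y1 + a) < ereal (r + \<alpha>)" using \<open>P a r\<close> by (auto simp: P_def)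
        obtain y2 where y2: "h y2 + g (y2 + b) < ereal (s + \<alpha>)" using \<open>P b s\<close> by (auto simp: P_def)
        obtain H1 G1 where HG1: "h y1 = ereal H1" "g (y1 + a) = ereal G1" "H1 + G1 < r + \<alpha>"
          using y1 hnm[of y1] gnm[of "y1 + a"] by (cases "h y1"; cases "g (y1 + a)") auto
        obtain H2 G2 where HG2: "h y2 = ereal H2" "g (y2 + b) = ereal G2" "H2 + G2 < s + \<alpha>"
          using y2 hnm[of y2] gnm[of "y2 + b"] by (cases "h y2"; cases "g (y2 + b)") auto
        define y where "y = l *\<^sub>R y1 + (1 - l) *\<^sub>R y2"
        have hy: "h y \<le> ereal (l * H1 + (1 - l) * H2)" unfolding y_def
          using convex_funD[OF h_convex, of y1 H1 y2 H2 l] HG1 HG2 that by simp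
        have eq: "y + (l *\<^sub>R a + (1 - l) *\<^sub>R b) = l *\<^sub>R (y1 + a) + (1 - l) *\<^sub>R (y2 + b)"
          unfolding y_def by (simp add: algebra_simps)
        have gy: "g (y + (l *\<^sub>R a + (1 - l) *\<^sub>R b)) \<le> ereal (l * G1 + (1 - l) * G2)" unfolding eq
          using convex_funD[OF g_convex, of "y1 + a" G1 "y2 + b" G2 l] HG1 HG2 that by simp
        have "l * (H1 + G1) < l * (r + \<alpha>)" using HG1(3) that by simp
        moreover have "(1 - l) * (H2 + G2) < (1 - l) * (s + \<alpha>)" using HG2(3) that by simp
        ultimately have "(l * H1 + (1 - l) * H2) + (l * G1 + (1 - l) * G2) < (l * r + (1 - l) * s) + \<alpha>"
          by (simp add: algebra_simps)
        note lt = this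
        have "h y + g (y + (l *\<^sub>R a + (1 - l) *\<^sub>R b)) \<le> ereal (l * H1 + (1 - l) * H2) + ereal (l * G1 + (1 - l) * G2)"
          by (rule add_mono[OF hy gy])
        also have "\<dots> < ereal ((l * r + (1 - l) * s) + \<alpha>)" using lt by simp
        finally have "h y + g (y + (l *\<^sub>R a + (1 - l) *\<^sub>R b)) < ereal ((l * r + (1 - l) * s) + \<alpha>)" .
        then show ?thesis unfolding P_def by blast
      qed
      have zero: "0 \<le> r" if P0: "P 0 r" for r
      proof -
        obtain y where y: "h y + g y < ereal (r + \<alpha>)" using P0 by (auto simp: P_def)
        have "A' \<le> h y + g y" unfolding A'_def by (rule INF_lower) simp
        then have "ereal \<alpha> \<le> h y + g y" using \<alpha> by simp
        then have "ereal \<alpha> < ereal (r + \<alpha>)" using y by (rule le_less_trans)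
        then show ?thesis by simp
      qed
      \<comment> \<open>neighbourhood where g is bounded above\<close>
      have "(g \<longlongrightarrow> g y0) (at y0)" using y0(3) by (simp add: continuous_at)
      moreover have "open {..< ereal (G0 + 1)}" "g y0 \<in> {..< ereal (G0 + 1)}" using G0 by auto
      ultimately have "eventually (\<lambda>z. g z \<in> {..< ereal (G0 + 1)}) (at y0)"
        by (rule topological_tendstoD)
      then obtain S where S: "open S" "y0 \<in> S" "\<And>z. z \<in> S \<Longrightarrow> z \<noteq> y0 \<Longrightarrow> g z < ereal (G0 + 1)"
        unfolding eventually_at_topological by auto
      define N where "N = (\<lambda>u. u + y0) -` S"
      have N: "open N" "0 \<in> N"
        unfolding N_def by (rule open_vimage_UNIV[OF tvs_cont(1)[OF lctvs] S(1)]) (use S(2) in simp)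
      define C where "C = H0 + G0 + 1 - \<alpha>"
      have PN: "P u C" if "u \<in> N" for u
      proof -
        have "g (y0 + u) < ereal (G0 + 1)" using S that G0 unfolding N_def
          by (cases "u + y0 = y0") (auto simp: add.commute)
        then have "h y0 + g (y0 + u) < ereal (C + \<alpha>)" using H0 unfolding C_def
          by (cases "g (y0 + u)") auto
        then show ?thesis unfolding P_def by blast
      qed
      have absorb: "\<exists>t>0. \<exists>r. P (t *\<^sub>R x) r" for x
        using tvs_absorb[OF lctvs N, of x] PN by blast
      obtain \<psi> where lin: "linear \<psi>" and dom: "\<And>x r. P x r \<Longrightarrow> \<psi> x \<le> r"
        using hahn_banach_convex[of P, OF conv absorb zero] by blast
      have contpsi: "continuous_on UNIV \<psi>"
        using tvs_linear_cont[OF lctvs lin N, of C] PN dom by blast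
      have domin: "ereal (\<psi> u + \<alpha>) \<le> h y + g (y + u)" for y u
      proof (cases "h y + g (y + u) = \<infinity>")
        case True show ?thesis by (subst True) simp
      next
        case False
        then obtain R where R: "h y + g (y + u) = ereal R"
          using hnm[of y] gnm[of "y + u"] by (cases "h y"; cases "g (y + u)") auto
        have "\<psi> u + \<alpha> \<le> R"
        proof (rule ccontr)
          assume neg: "\<not> \<psi> u + \<alpha> \<le> R"
          define r where "r = (\<psi> u + (R - \<alpha>)) / 2"
          have "R < r + \<alpha>" using neg unfolding r_def by (simp add: field_simps)
          then have "P u r" unfolding P_def using R by (intro exI[of _ y]) simp
          then have "\<psi> u \<le> r" by (rule dom)
          then show False using neg unfolding r_def by (simp add: field_simps)
        qed
        then show ?thesis using R by simp
      qed
      define \<phi> where "\<phi> = (\<lambda>y. - \<psi> y)"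
      have "linear \<phi>" unfolding \<phi>_def
      proof (rule linearI)
        fix x y show "- \<psi> (x + y) = - \<psi> x + - \<psi> y" by (simp add: linear_add[OF lin])
      next
        fix k :: real and x show "- \<psi> (k *\<^sub>R x) = k *\<^sub>R - \<psi> x" by (simp add: linear_cmul[OF lin])
      qed
      moreover have "continuous_on UNIV \<phi>" unfolding \<phi>_def by (rule continuous_on_minus[OF contpsi])
      ultimately have "\<phi> \<in> topo_dual" unfolding topo_dual_def by simp
      have bnd: "ereal (\<psi> z) + - g z \<le> ereal (- \<alpha> + \<psi> y + Hy)" if "h y = ereal Hy" for y Hy z
      proof -
        have "ereal (\<psi> (z - y) + \<alpha>) \<le> h y + g (y + (z - y))" by (rule domin)
        then have "ereal (\<psi> z - \<psi> y + \<alpha>) \<le> ereal Hy + g z" using that lin by (simp add: linear_diff)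
        then show ?thesis using gnm[of z] by (cases "g z") auto
      qed
      have gs_le: "negd_conj g \<phi> \<le> ereal (- \<alpha> + \<psi> y0 + H0)"
        unfolding S3 \<phi>_def by (rule SUP_least) (use bnd[OF H0] in simp)
      have "ereal (- \<phi> y0) + - g y0 \<le> negd_conj g \<phi>" unfolding S3 by (rule SUP_upper) simp
      then have "negd_conj g \<phi> \<noteq> -\<infinity>" using G0 by auto
      then obtain Gs where Gs: "negd_conj g \<phi> = ereal Gs" using gs_le by (cases "negd_conj g \<phi>") auto
      have hs_le: "cd_conj c K xs \<phi> \<le> ereal (- \<alpha> - Gs)"
        unfolding S2
      proof (rule SUP_least)
        fix y
        show "ereal (\<phi> y) + - h y \<le> ereal (- \<alpha> - Gs)"
        proof (cases "h y")
          case (real Hy)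
          have "negd_conj g \<phi> \<le> ereal (- \<alpha> + \<psi> y + Hy)"
            unfolding S3 \<phi>_def by (rule SUP_least) (use bnd[OF real] in simp)
          then show ?thesis using Gs real by (simp add: \<phi>_def)
        next
          case PInf then show ?thesis by simp
        next
          case MInf then show ?thesis using hnm by simp
        qed
      qed
      have "cd_conj c K xs \<phi> +\<^sub>u negd_conj g \<phi> \<le> ereal (- \<alpha>)"
        using hs_le Gs by (cases "cd_conj c K xs \<phi>") (auto simp: uadd_simps)
      then have "(INF ys\<in>topo_dual. cd_conj c K xs ys +\<^sub>u negd_conj g ys) \<le> ereal (- \<alpha>)"
        using \<open>\<phi> \<in> topo_dual\<close> by (meson INF_lower2)
      then show ?thesis using \<alpha> by simp
    qed
  qed
qed


end
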